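(* Let $n$ be odd and let $s_5(T)$ denote the number of $5$-element vertex subsets of a tournament $T$ inducing a strongly connected subtournament. For each odd $n\ge 9$, the maximum of $s_5(T)$ over all tournaments $T$ of order $n$ equals $\frac{(n+1)n(n-1)(n-3)(11n-47)}{1920}$ and is attained only at $T\cong RLT_n$. For $n=7$, the maximum is attained at $RLT_7$ and also at $DR_7$ and $Kz_7$.
   Context: A tournament is an orientation of a complete graph. $RLT_n$ (regular locally transitive tournament, $n$ odd) has vertex set $\mathbb{Z}_n$ with $i\to j$ iff $j-i\in\{1,\dots,\frac{n-1}{2}\}$ (mod $n$). A tournament is regular if all out-degrees equal $\frac{n-1}{2}$. $DR_7$ is the unique doubly regular tournament of order $7$ (regular, and the out-set of every vertex induces a regular subtournament). $\Delta$ denotes the cyclic triple (strong tournament on 3 vertices), $TT_2$ the tournament on 2 vertices, and $\Delta\cdot TT_2$ the 6-vertex tournament obtained from $\Delta$ by replacing each vertex by a copy of $TT_2$, with all arcs between copies oriented as the corresponding arc of $\Delta$. $Kz_7$ (the Kotzig tournament) is the unique regular tournament of order $7$ having $\Delta\cdot TT_2$ as a one-vertex-deleted subtournament. *)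

theory Defs
  imports Complex_Main
begin

text \<open>A tournament of order n: vertex set {0..<n}; T i j means the arc i -> j.
  Values of T outside {0..<n} are irrelevant.\<close>
definition tournament :: "nat \<Rightarrow> (nat \<Rightarrow> nat \<Rightarrow> bool) \<Rightarrow> bool" where
  "tournament n T \<longleftrightarrow> (\<forall>i<n. \<not> T i i) \<and>
     (\<forall>i<n. \<forall>j<n. i \<noteq> j \<longrightarrow> (T i j \<longleftrightarrow> \<not> T j i))"

definition iso_on :: "'a set \<Rightarrow> ('a \<Rightarrow> 'a \<Rightarrow> bool) \<Rightarrow> 'b set \<Rightarrow> ('b \<Rightarrow> 'b \<Rightarrow> bool) \<Rightarrow> bool" where
  "iso_on A T B U \<longleftrightarrow> (\<exists>f. bij_betw f A B \<and> (\<forall>x\<in>A. \<forall>y\<in>A. T x y \<longleftrightarrow> U (f x) (f y)))"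

definition tiso :: "nat \<Rightarrow> (nat \<Rightarrow> nat \<Rightarrow> bool) \<Rightarrow> (nat \<Rightarrow> nat \<Rightarrow> bool) \<Rightarrow> bool" where
  "tiso n T U \<longleftrightarrow> iso_on {0..<n} T {0..<n} U"

definition strong_on :: "(nat \<Rightarrow> nat \<Rightarrow> bool) \<Rightarrow> nat set \<Rightarrow> bool" where
  "strong_on T S \<longleftrightarrow>
     (\<forall>u\<in>S. \<forall>v\<in>S. (u, v) \<in> {(x, y). x \<in> S \<and> y \<in> S \<and> T x y}\<^sup>*)"

definition s5 :: "nat \<Rightarrow> (nat \<Rightarrow> nat \<Rightarrow> bool) \<Rightarrow> nat" where
  "s5 n T = card {S. S \<subseteq> {0..<n} \<and> card S = 5 \<and> strong_on T S}"

definition rlt :: "nat \<Rightarrow> nat \<Rightarrow> nat \<Rightarrow> bool" where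
  "rlt n i j \<longleftrightarrow> 1 \<le> (j + n - i) mod n \<and> (j + n - i) mod n \<le> (n - 1) div 2"

definition regular :: "nat \<Rightarrow> (nat \<Rightarrow> nat \<Rightarrow> bool) \<Rightarrow> bool" where
  "regular n T \<longleftrightarrow> tournament n T \<and> (\<forall>i<n. card {j. j < n \<and> T i j} = (n - 1) div 2)"

definition doubly_regular :: "nat \<Rightarrow> (nat \<Rightarrow> nat \<Rightarrow> bool) \<Rightarrow> bool" where
  "doubly_regular n T \<longleftrightarrow> regular n T \<and>
     (\<forall>v<n. let N = {j. j < n \<and> T v j} in
        \<forall>u\<in>N. card {w \<in> N. T u w} = (card N - 1) div 2)"

text \<open>Delta . TT_2 on {0..<6}: vertex k lies in copy k div 2 (a vertex of the cyclic
  triple 0 -> 1 -> 2 -> 0), with position k mod 2 inside the copy of TT_2 (0 -> 1).\<close>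
definition delta_tt2 :: "nat \<Rightarrow> nat \<Rightarrow> bool" where
  "delta_tt2 x y \<longleftrightarrow>
     (if x div 2 = y div 2 then x mod 2 = 0 \<and> y mod 2 = 1
      else y div 2 = (x div 2 + 1) mod 3)"

definition kotzig :: "nat \<Rightarrow> (nat \<Rightarrow> nat \<Rightarrow> bool) \<Rightarrow> bool" where
  "kotzig n T \<longleftrightarrow> regular n T \<and>
     (\<exists>v<n. iso_on ({0..<n} - {v}) T {0..<6::nat} delta_tt2)"

definition s5_max :: "nat \<Rightarrow> (nat \<Rightarrow> nat \<Rightarrow> bool) \<Rightarrow> bool" where
  "s5_max n T \<longleftrightarrow> tournament n T \<and> (\<forall>U. tournament n U \<longrightarrow> s5 n U \<le> s5 n T)"

end

theory Submission
  imports Defs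
begin


lemma choose4_real: "real (d choose 4) = real d * (real d - 1) * (real d - 2) * (real d - 3) / 24"
proof -
  have "fact 4 * (real d gchoose 4) = (\<Prod>i = 0..<4. real d - of_nat i)"
    by (rule gbinomial_mult_fact)
  moreover have "(\<Prod>i = 0..<4. real d - of_nat i) = real d * (real d - 1) * (real d - 2) * (real d - 3)"
    by (simp add: numeral_eq_Suc prod.atLeast0_lessThan_Suc)
  moreover have "(fact 4::real) = 24" by (simp add: numeral_eq_Suc)
  ultimately show ?thesis by (simp add: binomial_gbinomial)
qed

lemma choose5_real: "real (d choose 5) = real d * (real d - 1) * (real d - 2) * (real d - 3) * (real d - 4) / 120"
proof -
  have "fact 5 * (real d gchoose 5) = (\<Prod>i = 0..<5. real d - of_nat i)"
    by (rule gbinomial_mult_fact)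
  moreover have "(\<Prod>i = 0..<5. real d - of_nat i) = real d * (real d - 1) * (real d - 2) * (real d - 3) * (real d - 4)"
    by (simp add: numeral_eq_Suc prod.atLeast0_lessThan_Suc)
  moreover have "(fact 5::real) = 120" by (simp add: numeral_eq_Suc)
  ultimately show ?thesis by (simp add: binomial_gbinomial)
qed

lemma convex4:
  assumes "d \<le> 2*k" "k \<ge> 3"
  shows "2*(k choose 4) \<le> (d choose 4) + ((2*k - d) choose 4)"
    and "d \<noteq> k \<Longrightarrow> 2*(k choose 4) < (d choose 4) + ((2*k - d) choose 4)"
proof -
  define t where "t = real d - real k"
  have e: "real (2*k - d) = real k - t" using assms(1) by (simp add: t_def of_nat_diff)
  have d: "real d = real k + t" by (simp add: t_def)
  have key: "24 * (real (d choose 4) + real ((2*k - d) choose 4) - 2 * real (k choose 4))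
        = t^2 * (12*(real k - 3/2)^2 + 2*t^2 - 5)"
    unfolding choose4_real e d by (simp add: field_simps power2_eq_square)
  have pos: "12*(real k - 3/2)^2 + 2*t^2 - 5 > 0"
  proof -
    have "real k - 3/2 \<ge> 3/2" using assms(2) by simp
    hence "(real k - 3/2)^2 \<ge> (3/2)^2" by (rule power_mono) simp
    hence "(real k - 3/2)^2 \<ge> 9/4" by (simp add: power2_eq_square)
    moreover have "t^2 \<ge> 0" by simp
    ultimately show ?thesis by linarith
  qed
  have "t^2 * (12*(real k - 3/2)^2 + 2*t^2 - 5) \<ge> 0" using pos by simp
  with key have "real (2*(k choose 4)) \<le> real ((d choose 4) + ((2*k - d) choose 4))" by simp
  thus "2*(k choose 4) \<le> (d choose 4) + ((2*k - d) choose 4)" by linarith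
  assume "d \<noteq> k"
  hence "t \<noteq> 0" by (simp add: t_def)
  hence "t^2 > 0" by simp
  hence "t^2 * (12*(real k - 3/2)^2 + 2*t^2 - 5) > 0" using pos by simp
  with key have "real (2*(k choose 4)) < real ((d choose 4) + ((2*k - d) choose 4))" by simp
  thus "2*(k choose 4) < (d choose 4) + ((2*k - d) choose 4)" by linarith
qed

lemma formula_id:
  assumes "n = 2*k+1"
  shows "real (n choose 5) - real n * real (k choose 4) =
    (real n + 1) * real n * (real n - 1) * (real n - 3) * (11 * real n - 47) / 1920"
proof -
  have "real n = 2 * real k + 1" using assms by simp
  then show ?thesis unfolding choose4_real choose5_real by (simp add: field_simps)
qed



definition src_on :: "(nat \<Rightarrow> nat \<Rightarrow> bool) \<Rightarrow> nat set \<Rightarrow> nat \<Rightarrow> bool" where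
  "src_on T S v \<longleftrightarrow> v \<in> S \<and> (\<forall>x\<in>S. x \<noteq> v \<longrightarrow> T v x)"

definition F5 :: "nat \<Rightarrow> nat set set" where
  "F5 n = {S. S \<subseteq> {0..<n} \<and> card S = 5}"

definition outs :: "(nat \<Rightarrow> nat \<Rightarrow> bool) \<Rightarrow> nat \<Rightarrow> nat \<Rightarrow> nat set" where
  "outs T n v = {j. j < n \<and> T v j}"

definition SrcS :: "(nat \<Rightarrow> nat \<Rightarrow> bool) \<Rightarrow> nat \<Rightarrow> nat set set" where
  "SrcS T n = {S \<in> F5 n. \<exists>v. src_on T S v}"

definition NS :: "(nat \<Rightarrow> nat \<Rightarrow> bool) \<Rightarrow> nat \<Rightarrow> nat set set" where
  "NS T n = {S \<in> F5 n. \<not> strong_on T S}"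

lemma tour_conv: "tournament n T \<Longrightarrow> tournament n (\<lambda>i j. T j i)"
  unfolding tournament_def by blast

lemma tourD: "tournament n T \<Longrightarrow> i < n \<Longrightarrow> j < n \<Longrightarrow> i \<noteq> j \<Longrightarrow> T i j \<longleftrightarrow> \<not> T j i"
  and tour_irr: "tournament n T \<Longrightarrow> i < n \<Longrightarrow> \<not> T i i"
  unfolding tournament_def by blast+

lemma small_sink:
  assumes "tournament n T" "A \<subseteq> {0..<n}" "A \<noteq> {}" "card A \<le> 2" "finite A"
  shows "\<exists>q\<in>A. \<forall>x\<in>A. x \<noteq> q \<longrightarrow> T x q"
proof -
  have "card A = 1 \<or> card A = 2" using assms(3,4,5) by (cases "card A") auto
  then show ?thesis
  proof
    assume "card A = 1" then obtain q where "A = {q}" by (auto simp: card_Suc_eq)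
    thus ?thesis by auto
  next
    assume "card A = 2" then obtain p q where pq: "A = {p,q}" "p \<noteq> q" by (auto simp: card_2_iff)
    have "p < n" "q < n" using pq assms(2) by auto
    hence "T p q \<or> T q p" using tourD[OF assms(1)] pq(2) by blast
    thus ?thesis using pq by auto
  qed
qed

lemma strong_char:
  assumes T: "tournament n T" and S: "S \<subseteq> {0..<n}" "card S = 5"
  shows "strong_on T S \<longleftrightarrow> \<not> (\<exists>v. src_on T S v) \<and> \<not> (\<exists>v. src_on (\<lambda>i j. T j i) S v)"
proof -
  let ?R = "{(x, y). x \<in> S \<and> y \<in> S \<and> T x y}"
  have finS: "finite S" using S by (metis finite_atLeastLessThan finite_subset)
  have Sn: "\<And>x. x \<in> S \<Longrightarrow> x < n" using S by auto
  have other: "\<And>v. \<exists>x\<in>S. x \<noteq> v"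
  proof (rule ccontr)
    fix v assume "\<not> (\<exists>x\<in>S. x \<noteq> v)"
    hence "S \<subseteq> {v}" by auto
    hence "card S \<le> card {v}" by (intro card_mono) simp_all
    hence "card S \<le> 1" by simp
    with S show False by simp
  qed
  show ?thesis
  proof
    assume st: "strong_on T S"
    show "\<not> (\<exists>v. src_on T S v) \<and> \<not> (\<exists>v. src_on (\<lambda>i j. T j i) S v)"
    proof safe
      fix v assume sv: "src_on T S v"
      obtain x where x: "x \<in> S" "x \<noteq> v" using other by blast
      have "(x, v) \<in> ?R\<^sup>*" using st x sv unfolding strong_on_def src_on_def by blast
      then show False
      proof (cases rule: rtranclE)
        case base then show ?thesis using x by simp
      next
        case (step y)
        then have "y \<in> S" "T y v" by auto
        moreover have "v \<in> S" using sv by (simp add: src_on_def)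
        moreover have "y \<noteq> v" using \<open>T y v\<close> tour_irr[OF T, of v] Sn[of v] \<open>v \<in> S\<close> by auto
        ultimately have "T v y" using sv by (simp add: src_on_def)
        thus ?thesis using tourD[OF T, of v y] Sn[of v] Sn[of y] \<open>T y v\<close> \<open>y \<noteq> v\<close> \<open>v \<in> S\<close> \<open>y \<in> S\<close> by auto
      qed
    next
      fix v assume sv: "src_on (\<lambda>i j. T j i) S v"
      obtain x where x: "x \<in> S" "x \<noteq> v" using other by blast
      have "(v, x) \<in> ?R\<^sup>*" using st x sv unfolding strong_on_def src_on_def by blast
      then show False
      proof (cases rule: converse_rtranclE)
        case base then show ?thesis using x by simp
      next
        case (step y)
        then have "y \<in> S" "T v y" by auto
        moreover have "v \<in> S" using sv by (simp add: src_on_def)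
        moreover have "y \<noteq> v" using \<open>T v y\<close> tour_irr[OF T, of v] Sn[of v] \<open>v \<in> S\<close> by auto
        ultimately have "T y v" using sv by (simp add: src_on_def)
        thus ?thesis using tourD[OF T, of v y] Sn[of v] Sn[of y] \<open>T v y\<close> \<open>y \<noteq> v\<close> \<open>v \<in> S\<close> \<open>y \<in> S\<close> by auto
      qed
    qed
  next
    assume ns: "\<not> (\<exists>v. src_on T S v) \<and> \<not> (\<exists>v. src_on (\<lambda>i j. T j i) S v)"
    show "strong_on T S" unfolding strong_on_def
    proof (rule ccontr)
      assume "\<not> (\<forall>u\<in>S. \<forall>v\<in>S. (u, v) \<in> ?R\<^sup>*)"
      then obtain u v where uv: "u \<in> S" "v \<in> S" "(u, v) \<notin> ?R\<^sup>*" by blast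
      define A where "A = {y \<in> S. (u, y) \<in> ?R\<^sup>*}"
      define B where "B = S - A"
      have AS: "A \<subseteq> S" and uA: "u \<in> A" and vB: "v \<in> B" using uv by (auto simp: A_def B_def)
      have BA: "\<And>a b. a \<in> A \<Longrightarrow> b \<in> B \<Longrightarrow> T b a"
      proof -
        fix a b assume a: "a \<in> A" and b: "b \<in> B"
        have "\<not> T a b"
        proof
          assume "T a b"
          hence "(a, b) \<in> ?R" using a b by (auto simp: A_def B_def)
          moreover have "(u, a) \<in> ?R\<^sup>*" using a by (auto simp: A_def)
          ultimately have "(u, b) \<in> ?R\<^sup>*" by (meson rtrancl_into_rtrancl)
          thus False using b by (auto simp: A_def B_def)
        qed
        moreover have "a \<noteq> b" using a b by (auto simp: B_def)
        moreover have "a \<in> S" "b \<in> S" using a b AS by (auto simp: B_def)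
        ultimately show "T b a" using tourD[OF T, of a b] Sn[of a] Sn[of b] by auto
      qed
      have finA: "finite A" "finite B" using finS AS by (auto simp: B_def intro: finite_subset)
      have c1: "card B = card S - card A" unfolding B_def by (rule card_Diff_subset) (use finA AS in auto)
      have c2: "card A \<le> card S" by (rule card_mono[OF finS AS])
      have cardAB: "card A + card B = 5" using c1 c2 S(2) by linarith
      have "card A \<le> 2 \<or> card B \<le> 2" using cardAB by linarith
      then show False
      proof
        assume "card A \<le> 2"
        then obtain q where q: "q \<in> A" "\<forall>x\<in>A. x \<noteq> q \<longrightarrow> T x q"
          using small_sink[OF T, of A] AS S uA finA by blast
        have "src_on (\<lambda>i j. T j i) S q" unfolding src_on_def
          using q AS BA by (auto simp: B_def)
        thus False using ns by blast
      next
        assume "card B \<le> 2"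
        then obtain q where q: "q \<in> B" "\<forall>x\<in>B. x \<noteq> q \<longrightarrow> T q x"
          using small_sink[OF tour_conv[OF T], of B] S vB finA by (auto simp: B_def)
        have "src_on T S q" unfolding src_on_def
          using q BA by (auto simp: B_def)
        thus False using ns by blast
      qed
    qed
  qed
qed

lemma NS_eq: assumes T: "tournament n T" shows "NS T n = SrcS T n \<union> SrcS (\<lambda>i j. T j i) n"
  unfolding NS_def SrcS_def F5_def by (auto simp: strong_char[OF T])

lemma finite_F5: "finite (F5 n)"
  unfolding F5_def by (rule finite_subset[of _ "Pow {0..<n}"]) auto

lemma card_F5: "card (F5 n) = n choose 5"
  unfolding F5_def using n_subsets[of "{0..<n}" 5] by simp

lemma s5_NS: "s5 n T + card (NS T n) = n choose 5"
proof -
  have "{S. S \<subseteq> {0..<n} \<and> card S = 5 \<and> strong_on T S} \<union> NS T n = F5 n"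
    unfolding NS_def F5_def by auto
  moreover have "{S. S \<subseteq> {0..<n} \<and> card S = 5 \<and> strong_on T S} \<inter> NS T n = {}"
    unfolding NS_def F5_def by auto
  moreover have "finite {S. S \<subseteq> {0..<n} \<and> card S = 5 \<and> strong_on T S}" "finite (NS T n)"
    using finite_F5 unfolding NS_def F5_def by (auto intro: finite_subset)
  ultimately show ?thesis unfolding s5_def using card_F5 card_Un_disjoint by metis
qed

lemma card_SrcS:
  assumes T: "tournament n T"
  shows "card (SrcS T n) = (\<Sum>v<n. card (outs T n v) choose 4)"
proof -
  define G where "G v = insert v ` {X. X \<subseteq> outs T n v \<and> card X = 4}" for v
  have eq: "SrcS T n = (\<Union>v\<in>{..<n}. G v)"
  proof
    show "SrcS T n \<subseteq> (\<Union>v\<in>{..<n}. G v)"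
    proof
      fix S assume "S \<in> SrcS T n"
      then obtain v where S: "S \<subseteq> {0..<n}" "card S = 5" and v: "src_on T S v"
        unfolding SrcS_def F5_def by blast
      have vS: "v \<in> S" using v by (simp add: src_on_def)
      hence vn: "v < n" using S by auto
      have "S - {v} \<subseteq> outs T n v" using v S unfolding src_on_def outs_def by auto
      moreover have "card (S - {v}) = 4" using S vS by (simp add: card_Diff_singleton)
      moreover have "S = insert v (S - {v})" using vS by auto
      ultimately show "S \<in> (\<Union>v\<in>{..<n}. G v)" using vn unfolding G_def by blast
    qed
  next
    show "(\<Union>v\<in>{..<n}. G v) \<subseteq> SrcS T n"
    proof
      fix S assume "S \<in> (\<Union>v\<in>{..<n}. G v)"
      then obtain v X where v: "v < n" and X: "X \<subseteq> outs T n v" "card X = 4" and S: "S = insert v X"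
        unfolding G_def by blast
      have "v \<notin> X" using X tour_irr[OF T v] by (auto simp: outs_def)
      moreover have "finite X" using X(2) by (intro card_ge_0_finite) simp
      ultimately have "card S = 5" using S X by simp
      moreover have "S \<subseteq> {0..<n}" using S X v by (auto simp: outs_def)
      moreover have "src_on T S v" using S X unfolding src_on_def outs_def by auto
      ultimately show "S \<in> SrcS T n" unfolding SrcS_def F5_def by blast
    qed
  qed
  have disj: "\<forall>v\<in>{..<n}. \<forall>w\<in>{..<n}. v \<noteq> w \<longrightarrow> G v \<inter> G w = {}"
  proof (intro ballI impI)
    fix v w assume v: "v \<in> {..<n}" and w: "w \<in> {..<n}" and vw: "v \<noteq> w"
    have vn: "v < n" "w < n" using v w by auto
    show "G v \<inter> G w = {}"
    proof (rule ccontr)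
      assume "G v \<inter> G w \<noteq> {}"
      then obtain S where "S \<in> G v" "S \<in> G w" by blast
      then obtain X Y where X: "X \<subseteq> outs T n v" and Y: "Y \<subseteq> outs T n w" and e: "insert v X = insert w Y"
        unfolding G_def by auto
      have "w \<in> insert w Y" by simp
      hence "w \<in> insert v X" by (simp only: e)
      hence "w \<in> X" using vw by simp
      hence "T v w" using X by (auto simp: outs_def)
      moreover have "v \<in> insert v X" by simp
      hence "v \<in> insert w Y" by (simp only: e)
      hence "v \<in> Y" using vw by simp
      hence "T w v" using Y by (auto simp: outs_def)
      moreover have "T v w \<longleftrightarrow> \<not> T w v" by (rule tourD[OF T vn vw])
      ultimately show False by blast
    qed
  qed
  have finG: "\<forall>v\<in>{..<n}. finite (G v)"
  proof
    fix v show "finite (G v)" unfolding G_def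
      by (rule finite_imageI, rule finite_subset[of _ "Pow (outs T n v)"]) (auto simp: outs_def)
  qed
  have cG: "card (G v) = card (outs T n v) choose 4" if "v < n" for v
  proof -
    have "inj_on (insert v) {X. X \<subseteq> outs T n v \<and> card X = 4}"
    proof (rule inj_onI)
      fix X Y assume "X \<in> {X. X \<subseteq> outs T n v \<and> card X = 4}" "Y \<in> {X. X \<subseteq> outs T n v \<and> card X = 4}"
        "insert v X = insert v Y"
      moreover have "v \<notin> outs T n v" using tour_irr[OF T that] by (simp add: outs_def)
      ultimately have "v \<notin> X" "v \<notin> Y" "insert v X = insert v Y" by auto
      thus "X = Y" by (metis Diff_insert_absorb)
    qed
    hence "card (G v) = card {X. X \<subseteq> outs T n v \<and> card X = 4}" unfolding G_def by (rule card_image)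
    also have "\<dots> = card (outs T n v) choose 4" by (rule n_subsets) (simp add: outs_def)
    finally show ?thesis .
  qed
  have "card (SrcS T n) = (\<Sum>v<n. card (G v))" unfolding eq
    by (rule card_UN_disjoint) (use finG disj in auto)
  also have "\<dots> = (\<Sum>v<n. card (outs T n v) choose 4)" by (rule sum.cong) (simp_all add: cG)
  finally show ?thesis .
qed

lemma deg_sum:
  assumes T: "tournament n T" and v: "v < n"
  shows "card (outs T n v) + card (outs (\<lambda>i j. T j i) n v) = n - 1"
proof -
  have "outs T n v \<union> outs (\<lambda>i j. T j i) n v = {0..<n} - {v}"
  proof (rule set_eqI)
    fix j
    show "j \<in> outs T n v \<union> outs (\<lambda>i j. T j i) n v \<longleftrightarrow> j \<in> {0..<n} - {v}"
    proof (cases "j < n \<and> j \<noteq> v")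
      case True
      hence "T v j \<longleftrightarrow> \<not> T j v" using tourD[OF T v, of j] by auto
      thus ?thesis using True by (auto simp: outs_def)
    next
      case False
      thus ?thesis using tour_irr[OF T v] by (auto simp: outs_def)
    qed
  qed
  moreover have "outs T n v \<inter> outs (\<lambda>i j. T j i) n v = {}"
  proof -
    { fix j assume "j \<in> outs T n v" "j \<in> outs (\<lambda>i j. T j i) n v"
      hence j: "j < n" "T v j" "T j v" by (auto simp: outs_def)
      hence "j \<noteq> v" using tour_irr[OF T v] by auto
      hence False using tourD[OF T v j(1)] j by auto }
    thus ?thesis by blast
  qed
  moreover have "finite (outs T n v)" "finite (outs (\<lambda>i j. T j i) n v)" by (auto simp: outs_def)
  ultimately have "card (outs T n v) + card (outs (\<lambda>i j. T j i) n v) = card ({0..<n} - {v})"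
    by (metis card_Un_disjoint)
  also have "\<dots> = n - 1" using v by simp
  finally show ?thesis .
qed



lemma finite_NS: "finite (NS T n)" "finite (SrcS T n)"
  using finite_F5[of n] unfolding NS_def SrcS_def by auto

lemma bound_main:
  assumes T: "tournament n T" and n: "n = 2*k+1" and k: "k \<ge> 3"
  shows "n * (k choose 4) \<le> card (NS T n)"
    and "card (NS T n) = n * (k choose 4) \<Longrightarrow>
         (\<forall>v<n. card (outs T n v) = k) \<and> SrcS T n = NS T n \<and> SrcS (\<lambda>i j. T j i) n = NS T n"
proof -
  let ?C = "\<lambda>T. SrcS T n"
  let ?d = "\<lambda>v. card (outs T n v)"
  let ?e = "\<lambda>v. card (outs (\<lambda>i j. T j i) n v)"
  have e: "?e v = 2*k - ?d v" "?d v \<le> 2*k" if "v < n" for v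
    using deg_sum[OF T that] n by auto
  have c1: "card (?C T) = (\<Sum>v<n. ?d v choose 4)" by (rule card_SrcS[OF T])
  have c2: "card (?C (\<lambda>i j. T j i)) = (\<Sum>v<n. ?e v choose 4)" by (rule card_SrcS[OF tour_conv[OF T]])
  have sub1: "?C T \<subseteq> NS T n" and sub2: "?C (\<lambda>i j. T j i) \<subseteq> NS T n" using NS_eq[OF T] by auto
  have le1: "card (?C T) \<le> card (NS T n)" and le2: "card (?C (\<lambda>i j. T j i)) \<le> card (NS T n)"
    using card_mono[OF finite_NS(1) sub1] card_mono[OF finite_NS(1) sub2] by auto
  have sumeq: "card (?C T) + card (?C (\<lambda>i j. T j i)) = (\<Sum>v<n. (?d v choose 4) + (?e v choose 4))"
    unfolding c1 c2 by (simp add: sum.distrib)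
  have pv: "2 * (k choose 4) \<le> (?d v choose 4) + (?e v choose 4)" if "v < n" for v
    using convex4(1)[OF e(2)[OF that] k] e(1)[OF that] by simp
  have "(\<Sum>v<n. 2 * (k choose 4)) \<le> (\<Sum>v<n. (?d v choose 4) + (?e v choose 4))"
    by (rule sum_mono) (use pv in auto)
  hence S: "2 * (n * (k choose 4)) \<le> card (?C T) + card (?C (\<lambda>i j. T j i))"
    using sumeq by simp
  thus "n * (k choose 4) \<le> card (NS T n)" using le1 le2 by linarith
  assume eq: "card (NS T n) = n * (k choose 4)"
  have a1: "card (?C T) = card (NS T n)" and a2: "card (?C (\<lambda>i j. T j i)) = card (NS T n)"
    using S le1 le2 eq by linarith+
  have "?C T = NS T n" by (rule card_subset_eq[OF finite_NS(1) sub1 a1])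
  moreover have "?C (\<lambda>i j. T j i) = NS T n" by (rule card_subset_eq[OF finite_NS(1) sub2 a2])
  moreover have "\<forall>v<n. ?d v = k"
  proof (rule ccontr)
    assume "\<not> (\<forall>v<n. ?d v = k)"
    then obtain v where v: "v < n" "?d v \<noteq> k" by blast
    have "2 * (k choose 4) < (?d v choose 4) + (?e v choose 4)"
      using convex4(2)[OF e(2)[OF v(1)] k v(2)] e(1)[OF v(1)] by simp
    hence "(\<Sum>v<n. 2 * (k choose 4)) < (\<Sum>v<n. (?d v choose 4) + (?e v choose 4))"
      using v(1) pv by (intro sum_strict_mono_ex1) auto
    hence "2 * (n * (k choose 4)) < card (?C T) + card (?C (\<lambda>i j. T j i))"
      using sumeq by simp
    thus False using a1 a2 eq by linarith
  qed
  ultimately show "(\<forall>v<n. card (outs T n v) = k) \<and> SrcS T n = NS T n \<and> SrcS (\<lambda>i j. T j i) n = NS T n"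
    by blast
qed

lemma propA:
  assumes T: "tournament n T" and sub: "SrcS T n \<subseteq> SrcS (\<lambda>i j. T j i) n"
    and u: "u < n" and X: "X \<subseteq> outs T n u" "card X = 4"
  shows "\<exists>t. src_on (\<lambda>i j. T j i) X t"
proof -
  have uX: "u \<notin> X" using X tour_irr[OF T u] by (auto simp: outs_def)
  have finX: "finite X" using X(2) by (intro card_ge_0_finite) simp
  have "insert u X \<in> SrcS T n"
    unfolding SrcS_def F5_def src_on_def using X u uX finX by (auto simp: outs_def)
  with sub obtain t where t: "src_on (\<lambda>i j. T j i) (insert u X) t" unfolding SrcS_def by blast
  have "t \<noteq> u"
  proof
    assume tu: "t = u"
    obtain x where x: "x \<in> X" using X(2) by fastforce
    hence "x \<noteq> u" using uX by auto
    hence "T x u" using t tu x unfolding src_on_def by auto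
    moreover have "T u x" using x X by (auto simp: outs_def)
    moreover have "x < n" using x X by (auto simp: outs_def)
    ultimately show False using tourD[OF T u \<open>x < n\<close>] \<open>x \<noteq> u\<close> by auto
  qed
  hence "src_on (\<lambda>i j. T j i) X t" using t unfolding src_on_def by auto
  thus ?thesis by blast
qed



definition PA :: "(nat \<Rightarrow> nat \<Rightarrow> bool) \<Rightarrow> nat \<Rightarrow> bool" where
  "PA T n \<longleftrightarrow> (\<forall>u<n. \<forall>X. X \<subseteq> outs T n u \<and> card X = 4 \<longrightarrow> (\<exists>t. src_on (\<lambda>i j. T j i) X t))"

lemma anti: "tournament n T \<Longrightarrow> i < n \<Longrightarrow> j < n \<Longrightarrow> T i j \<Longrightarrow> T j i \<Longrightarrow> False"
  by (metis tourD tour_irr)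

lemma tot: "tournament n T \<Longrightarrow> i < n \<Longrightarrow> j < n \<Longrightarrow> i \<noteq> j \<Longrightarrow> \<not> T i j \<Longrightarrow> T j i"
  by (metis tourD)

lemma irr2: "tournament n T \<Longrightarrow> i < n \<Longrightarrow> T i j \<Longrightarrow> i \<noteq> j"
  using tour_irr by blast

lemma outsD: "x \<in> outs T n y \<Longrightarrow> x < n \<and> T y x"
  by (simp add: outs_def)

lemma L1:
  assumes T: "tournament n T" and P: "PA T n" and y: "y < n"
    and abc: "a \<in> outs T n y" "b \<in> outs T n y" "c \<in> outs T n y"
    and cyc: "T a b" "T b c" "T c a"
    and x: "x \<in> outs T n y" "x \<notin> {a,b,c}"
  shows "T a x \<and> T b x \<and> T c x"
proof -
  have lt: "a < n" "b < n" "c < n" "x < n" using abc x by (auto simp: outs_def)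
  have d: "a \<noteq> b" "b \<noteq> c" "c \<noteq> a" using irr2[OF T] lt cyc by auto
  have "card {a,b,c,x} = 4" using d x(2) by auto
  moreover have "{a,b,c,x} \<subseteq> outs T n y" using abc x by auto
  ultimately obtain t where t: "src_on (\<lambda>i j. T j i) {a,b,c,x} t" using P y unfolding PA_def by blast
  have "t = x"
  proof (rule ccontr)
    assume "t \<noteq> x"
    hence "t = a \<or> t = b \<or> t = c" using t by (auto simp: src_on_def)
    thus False
    proof (elim disjE)
      assume "t = a" hence "T b a" using t d by (auto simp: src_on_def)
      thus False using anti[OF T lt(1) lt(2)] cyc by blast
    next
      assume "t = b" hence "T c b" using t d by (auto simp: src_on_def)
      thus False using anti[OF T lt(2) lt(3)] cyc by blast
    next
      assume "t = c" hence "T a c" using t d by (auto simp: src_on_def)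
      thus False using anti[OF T lt(3) lt(1)] cyc by blast
    qed
  qed
  thus ?thesis using t x(2) by (auto simp: src_on_def)
qed

lemma L2:
  assumes T: "tournament n T" and P: "PA (\<lambda>i j. T j i) n" and y: "y < n"
    and abc: "T a y" "T b y" "T c y" "a < n" "b < n" "c < n"
    and cyc: "T a b" "T b c" "T c a"
    and x: "T x y" "x < n" "x \<notin> {a,b,c}"
  shows "T x a \<and> T x b \<and> T x c"
  using L1[OF tour_conv[OF T] P y, of a c b x] abc cyc x by (auto simp: outs_def)

lemma key_nocycle:
  assumes T: "tournament n T" and P1: "PA T n" and P2: "PA (\<lambda>i j. T j i) n"
    and reg: "\<forall>v<n. card (outs T n v) = k" and k: "k \<ge> 4"
    and u: "u < n" and abc: "a \<in> outs T n u" "b \<in> outs T n u" "c \<in> outs T n u"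
    and cyc: "T a b" "T b c" "T c a"
  shows False
proof -
  have lt: "a < n" "b < n" "c < n" using abc by (auto simp: outs_def)
  have ua: "T u a" "T u b" "T u c" using abc by (auto simp: outs_def)
  have d: "a \<noteq> b" "b \<noteq> c" "c \<noteq> a" using irr2[OF T] lt cyc by auto
  have du: "u \<noteq> a" "u \<noteq> b" "u \<noteq> c" using irr2[OF T u] ua by auto
  have finO: "finite (outs T n v)" for v by (simp add: outs_def)
  obtain x where x: "x \<in> outs T n u" "x \<notin> {a,b,c}"
  proof -
    have "\<not> outs T n u \<subseteq> {a,b,c}"
    proof
      assume "outs T n u \<subseteq> {a,b,c}"
      hence "card (outs T n u) \<le> card {a,b,c}" by (intro card_mono) auto
      also have "\<dots> \<le> 3" by (simp add: card_insert_le_m1)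
      finally show False using reg u k by simp
    qed
    thus ?thesis using that by blast
  qed
  have xn: "x < n" "T u x" using x by (auto simp: outs_def)
  have E: "T a x" "T b x" "T c x" using L1[OF T P1 u abc cyc x] by auto
  have Dc: "z = u" if z: "z < n" "T z a" "T z b" "T z c" for z
  proof (rule ccontr)
    assume zu: "z \<noteq> u"
    have za: "z \<noteq> a" using irr2[OF T z(1) z(2)] .
    show False
    proof (cases "T u z")
      case True
      hence "z \<in> outs T n u" using z by (auto simp: outs_def)
      moreover have "z \<notin> {a,b,c}" using irr2[OF T z(1)] z by auto
      ultimately have "T a z" using L1[OF T P1 u abc cyc] by blast
      thus False using anti[OF T lt(1) z(1)] z by blast
    next
      case False
      hence "T z u" using tot[OF T u z(1)] zu by auto
      hence "a \<in> outs T n z" "b \<in> outs T n z" "c \<in> outs T n z" "u \<in> outs T n z"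
        using z lt u by (auto simp: outs_def)
      moreover have "u \<notin> {a,b,c}" using du by auto
      ultimately have "T a u" using L1[OF T P1 z(1) _ _ _ cyc] by blast
      thus False using anti[OF T lt(1) u] ua by blast
    qed
  qed
  have Ec: "z = x" if z: "z < n" "T a z" "T b z" "T c z" for z
  proof (rule ccontr)
    assume zx: "z \<noteq> x"
    show False
    proof (cases "T x z")
      case True
      have "x \<notin> {a,b,c}" using x by auto
      hence "T x a" using L2[OF T P2 z(1) z(2,3,4) lt cyc True xn(1)] by blast
      thus False using anti[OF T lt(1) xn(1)] E by blast
    next
      case False
      hence "T z x" using tot[OF T xn(1) z(1)] zx by auto
      moreover have "z \<notin> {a,b,c}" using irr2[OF T lt(1)] irr2[OF T lt(2)] irr2[OF T lt(3)] z by auto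
      ultimately have "T z a" using L2[OF T P2 xn(1) E lt cyc] z(1) by blast
      thus False using anti[OF T lt(1) z(1)] z by blast
    qed
  qed
  have sub1: "outs T n u \<subseteq> {a,b,c,x}"
  proof
    fix y assume y: "y \<in> outs T n u"
    show "y \<in> {a,b,c,x}"
    proof (cases "y \<in> {a,b,c}")
      case False
      hence "T a y \<and> T b y \<and> T c y" using L1[OF T P1 u abc cyc y] by blast
      hence "y = x" using Ec y by (auto simp: outs_def)
      thus ?thesis by simp
    next
      case True thus ?thesis by auto
    qed
  qed
  have "k \<le> card {a,b,c,x}" using card_mono[OF _ sub1] reg u by simp
  also have "\<dots> \<le> 4" by (simp add: card_insert_le_m1)
  finally have k4: "k = 4" using k by simp
  have sub2: "outs (\<lambda>i j. T j i) n x \<subseteq> {a,b,c,u}"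
  proof
    fix y assume y: "y \<in> outs (\<lambda>i j. T j i) n x"
    hence yy: "y < n" "T y x" by (auto simp: outs_def)
    show "y \<in> {a,b,c,u}"
    proof (cases "y \<in> {a,b,c}")
      case False
      hence "T y a \<and> T y b \<and> T y c" using L2[OF T P2 xn(1) E lt cyc yy(2) yy(1)] by blast
      hence "y = u" using Dc yy by auto
      thus ?thesis by simp
    next
      case True thus ?thesis by auto
    qed
  qed
  have cx: "card (outs T n x) = 4" using reg xn k4 by simp
  obtain m where m: "src_on (\<lambda>i j. T j i) (outs T n x) m"
    using P1 xn(1) cx unfolding PA_def by blast
  have mo: "m \<in> outs T n x" and msink: "\<And>z. z \<in> outs T n x \<Longrightarrow> z \<noteq> m \<Longrightarrow> T z m"
    using m by (auto simp: src_on_def)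
  have mn: "m < n" "T x m" using mo by (auto simp: outs_def)
  have sub3: "outs T n m \<subseteq> {u,a,b,c}"
  proof
    fix j assume j: "j \<in> outs T n m"
    hence jj: "j < n" "T m j" by (auto simp: outs_def)
    show "j \<in> {u,a,b,c}"
    proof (rule ccontr)
      assume nj: "j \<notin> {u,a,b,c}"
      have jx: "j \<noteq> x" using anti[OF T mn(1) xn(1)] mn jj by blast
      show False
      proof (cases "T x j")
        case True
        hence "j \<in> outs T n x" using jj by (auto simp: outs_def)
        moreover have "j \<noteq> m" using irr2[OF T mn(1) jj(2)] by simp
        ultimately have "T j m" using msink by blast
        thus False using anti[OF T mn(1) jj(1)] jj by blast
      next
        case False
        hence "T j x" using tot[OF T xn(1) jj(1)] jx by auto
        hence "j \<in> outs (\<lambda>i j. T j i) n x" using jj by (auto simp: outs_def)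
        thus False using sub2 nj by auto
      qed
    qed
  qed
  have "outs T n m = {u,a,b,c}"
  proof (rule card_seteq[OF _ sub3])
    show "finite {u,a,b,c}" by simp
    have "card {u,a,b,c} \<le> 4" by (simp add: card_insert_le_m1)
    thus "card {u,a,b,c} \<le> card (outs T n m)" using reg mn k4 by simp
  qed
  hence "{u,a,b,c} \<subseteq> outs T n m" "card {u,a,b,c} = 4" using d du by auto
  then obtain t where t: "src_on (\<lambda>i j. T j i) {u,a,b,c} t" using P1 mn(1) unfolding PA_def by blast
  hence "t = u \<or> t = a \<or> t = b \<or> t = c" by (auto simp: src_on_def)
  thus False
  proof (elim disjE)
    assume "t = u" hence "T a u" using t du by (auto simp: src_on_def)
    thus False using anti[OF T lt(1) u] ua by blast
  next
    assume "t = a" hence "T b a" using t d by (auto simp: src_on_def)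
    thus False using anti[OF T lt(1) lt(2)] cyc by blast
  next
    assume "t = b" hence "T c b" using t d by (auto simp: src_on_def)
    thus False using anti[OF T lt(2) lt(3)] cyc by blast
  next
    assume "t = c" hence "T a c" using t d by (auto simp: src_on_def)
    thus False using anti[OF T lt(3) lt(1)] cyc by blast
  qed
qed



definition rk :: "(nat \<Rightarrow> nat \<Rightarrow> bool) \<Rightarrow> nat set \<Rightarrow> nat \<Rightarrow> nat" where
  "rk T Y y = card {z \<in> Y. T z y}"

lemma rank_lt:
  assumes T: "tournament n T" and Y: "Y \<subseteq> {0..<n}"
    and nc: "\<forall>a\<in>Y. \<forall>b\<in>Y. \<forall>c\<in>Y. \<not> (T a b \<and> T b c \<and> T c a)"
    and y: "y \<in> Y" "y' \<in> Y" "T y y'"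
  shows "rk T Y y < rk T Y y'"
proof -
  have fin: "finite Y" using Y finite_subset by blast
  have ln: "y < n" "y' < n" using y Y by auto
  have "{z \<in> Y. T z y} \<subset> {z \<in> Y. T z y'}"
  proof
    show "{z \<in> Y. T z y} \<subseteq> {z \<in> Y. T z y'}"
    proof
      fix z assume z: "z \<in> {z \<in> Y. T z y}"
      hence zz: "z \<in> Y" "T z y" "z < n" using Y by auto
      have "T z y'"
      proof (rule ccontr)
        assume nz: "\<not> T z y'"
        have "z \<noteq> y'" using anti[OF T ln(2) ln(1)] zz y by blast
        hence "T y' z" using tot[OF T zz(3) ln(2)] nz by blast
        thus False using nc zz y by blast
      qed
      thus "z \<in> {z \<in> Y. T z y'}" using zz by simp
    qed
    have "y \<in> {z \<in> Y. T z y'}" using y by simp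
    moreover have "y \<notin> {z \<in> Y. T z y}" using tour_irr[OF T ln(1)] by simp
    ultimately show "{z \<in> Y. T z y} \<noteq> {z \<in> Y. T z y'}" by blast
  qed
  thus ?thesis unfolding rk_def by (rule psubset_card_mono[rotated]) (use fin in simp)
qed

lemma rank_iff:
  assumes T: "tournament n T" and Y: "Y \<subseteq> {0..<n}"
    and nc: "\<forall>a\<in>Y. \<forall>b\<in>Y. \<forall>c\<in>Y. \<not> (T a b \<and> T b c \<and> T c a)"
    and y: "y \<in> Y" "y' \<in> Y"
  shows "T y y' \<longleftrightarrow> rk T Y y < rk T Y y'"
proof
  assume "T y y'" thus "rk T Y y < rk T Y y'" using rank_lt[OF T Y nc y] by blast
next
  assume lt: "rk T Y y < rk T Y y'"
  have ln: "y < n" "y' < n" using y Y by auto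
  have "y \<noteq> y'" using lt by auto
  show "T y y'"
  proof (rule ccontr)
    assume "\<not> T y y'"
    hence "T y' y" using tot[OF T ln \<open>y \<noteq> y'\<close>] by blast
    hence "rk T Y y' < rk T Y y" using rank_lt[OF T Y nc y(2) y(1)] by blast
    thus False using lt by simp
  qed
qed

lemma rank_bij:
  assumes T: "tournament n T" and Y: "Y \<subseteq> {0..<n}"
    and nc: "\<forall>a\<in>Y. \<forall>b\<in>Y. \<forall>c\<in>Y. \<not> (T a b \<and> T b c \<and> T c a)"
  shows "bij_betw (rk T Y) Y {0..<card Y}"
proof -
  have fin: "finite Y" using Y finite_subset by blast
  have inj: "inj_on (rk T Y) Y"
  proof (rule inj_onI)
    fix y y' assume y: "y \<in> Y" "y' \<in> Y" and e: "rk T Y y = rk T Y y'"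
    show "y = y'"
    proof (rule ccontr)
      assume ne: "y \<noteq> y'"
      have ln: "y < n" "y' < n" using y Y by auto
      have "T y y' \<or> T y' y" using tot[OF T ln ne] by blast
      thus False using rank_lt[OF T Y nc y] rank_lt[OF T Y nc y(2) y(1)] e by auto
    qed
  qed
  have rng: "rk T Y ` Y \<subseteq> {0..<card Y}"
  proof
    fix r assume "r \<in> rk T Y ` Y"
    then obtain y where y: "y \<in> Y" "r = rk T Y y" by blast
    have yn: "y < n" using y Y by auto
    have "{z \<in> Y. T z y} \<subseteq> Y - {y}" using tour_irr[OF T yn] by auto
    hence "rk T Y y \<le> card (Y - {y})" unfolding rk_def by (rule card_mono[rotated]) (use fin in simp)
    also have "\<dots> < card Y" using y(1) fin by (rule card_Diff1_less[rotated])
    finally show "r \<in> {0..<card Y}" using y by simp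
  qed
  have "card (rk T Y ` Y) = card Y" using card_image[OF inj] .
  hence "rk T Y ` Y = {0..<card Y}" using rng by (intro card_subset_eq) auto
  thus ?thesis using inj unfolding bij_betw_def by blast
qed

lemma rlt_char:
  assumes n: "n = 2*k+1" and i: "i < n" and j: "j < n"
  shows "rlt n i j \<longleftrightarrow> (i < j \<and> j - i \<le> k) \<or> (j < i \<and> i - j \<ge> k + 1)"
proof -
  have h: "(n - 1) div 2 = k" using n by simp
  show ?thesis
  proof (cases "i \<le> j")
    case True
    have e: "j + n - i = (j - i) + n" using True by arith
    have l: "j - i < n" using j by arith
    have "(j + n - i) mod n = j - i" unfolding e using l by simp
    moreover have "(1 \<le> j - i \<and> j - i \<le> k) \<longleftrightarrow> ((i < j \<and> j - i \<le> k) \<or> (j < i \<and> i - j \<ge> k + 1))"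
      using True by arith
    ultimately show ?thesis unfolding rlt_def h by simp
  next
    case False
    have l: "j + n - i < n" using False i by linarith
    have "(j + n - i) mod n = j + n - i" using l by (rule mod_less)
    moreover have "(1 \<le> j + n - i \<and> j + n - i \<le> k) \<longleftrightarrow> ((i < j \<and> j - i \<le> k) \<or> (j < i \<and> i - j \<ge> k + 1))"
      using False n i by arith
    ultimately show ?thesis unfolding rlt_def h by simp
  qed
qed



lemma iso_rlt:
  assumes T: "tournament n T" and n: "n = 2*k+1" and k: "k \<ge> 1"
    and reg: "\<forall>v<n. card (outs T n v) = k"
    and nc: "\<forall>u<n. \<forall>a\<in>outs T n u. \<forall>b\<in>outs T n u. \<forall>c\<in>outs T n u. \<not> (T a b \<and> T b c \<and> T c a)"
  shows "tiso n T (rlt n)"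
proof -
  define W where "W = outs T n 0"
  define Z where "Z = outs (\<lambda>i j. T j i) n 0"
  define rW where "rW = rk T W"
  define rZ where "rZ = rk T Z"
  have n0: "0 < n" using n by simp
  have cW: "card W = k" using reg n0 unfolding W_def by simp
  have cZ: "card Z = k" using deg_sum[OF T n0] reg n0 n unfolding Z_def by simp
  have Wn: "W \<subseteq> {0..<n}" and Zn: "Z \<subseteq> {0..<n}" unfolding W_def Z_def outs_def by auto
  have Wd: "w \<in> W \<longleftrightarrow> w < n \<and> T 0 w" for w unfolding W_def outs_def by simp
  have Zd: "z \<in> Z \<longleftrightarrow> z < n \<and> T z 0" for z unfolding Z_def outs_def by simp
  have ncW: "\<forall>a\<in>W. \<forall>b\<in>W. \<forall>c\<in>W. \<not> (T a b \<and> T b c \<and> T c a)" using nc n0 unfolding W_def by blast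
  have bW: "bij_betw rW W {0..<k}" using rank_bij[OF T Wn ncW] cW unfolding rW_def by simp
  have rWk: "rW w < k" if "w \<in> W" for w using bW that unfolding bij_betw_def by auto
  have rWiff: "T w w' \<longleftrightarrow> rW w < rW w'" if "w \<in> W" "w' \<in> W" for w w'
    using rank_iff[OF T Wn ncW that] unfolding rW_def .
  obtain ws where ws: "ws \<in> W" "rW ws = k - 1"
  proof -
    have "k - 1 \<in> rW ` W" using bW k unfolding bij_betw_def by auto
    then obtain w0 where "w0 \<in> W" "k - 1 = rW w0" by blast
    thus ?thesis using that by simp
  qed
  have wsn: "ws < n" "T 0 ws" using ws Wd by auto
  have wsink: "T w ws" if "w \<in> W" "w \<noteq> ws" for w
  proof (rule ccontr)
    assume "\<not> T w ws"
    hence "T ws w" using tot[OF T _ wsn(1) that(2)] that(1) Wd by blast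
    hence "rW ws < rW w" using rWiff ws that by blast
    thus False using rWk[OF that(1)] ws by simp
  qed
  have Zeq: "outs T n ws = Z"
  proof (rule card_subset_eq)
    show "finite Z" unfolding Z_def outs_def by simp
    show "outs T n ws \<subseteq> Z"
    proof
      fix j assume "j \<in> outs T n ws"
      hence j: "j < n" "T ws j" by (auto simp: outs_def)
      have j0: "j \<noteq> 0"
      proof
        assume "j = 0" with j have "T ws 0" by simp
        thus False using anti[OF T wsn(1) n0] wsn(2) by blast
      qed
      have "j \<notin> W"
      proof
        assume jW: "j \<in> W"
        have "j \<noteq> ws" using irr2[OF T wsn(1) j(2)] by simp
        hence "T j ws" using wsink jW by blast
        thus False using anti[OF T wsn(1) j(1)] j by blast
      qed
      hence "\<not> T 0 j" using j Wd by blast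
      hence "T j 0" using tot[OF T n0 j(1)] j0 by blast
      thus "j \<in> Z" using Zd j by blast
    qed
    show "card (outs T n ws) = card Z" using reg wsn cZ by simp
  qed
  have ncZ: "\<forall>a\<in>Z. \<forall>b\<in>Z. \<forall>c\<in>Z. \<not> (T a b \<and> T b c \<and> T c a)" using nc wsn unfolding Zeq[symmetric] by blast
  have bZ: "bij_betw rZ Z {0..<k}" using rank_bij[OF T Zn ncZ] cZ unfolding rZ_def by simp
  have rZk: "rZ z < k" if "z \<in> Z" for z using bZ that unfolding bij_betw_def by auto
  have rZiff: "T z z' \<longleftrightarrow> rZ z < rZ z'" if "z \<in> Z" "z' \<in> Z" for z z'
    using rank_iff[OF T Zn ncZ that] unfolding rZ_def .
  have part: "v = 0 \<or> v \<in> W \<or> v \<in> Z" if "v < n" for v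
    using tot[OF T n0 that] Wd Zd that by blast
  have WZ: "w \<notin> Z" if "w \<in> W" for w using anti[OF T n0, of w] that Wd Zd by blast
  have W0: "0 \<notin> W" using tour_irr[OF T n0] Wd by blast
  have Z0: "0 \<notin> Z" using tour_irr[OF T n0] Zd by blast
  have cross: "T w z \<longleftrightarrow> rZ z \<le> rW w" if w: "w \<in> W" and z: "z \<in> Z" for w z
  proof -
    have wn: "w < n" "T 0 w" using w Wd by auto
    have zn: "z < n" "T z 0" using z Zd by auto
    define Ow where "Ow = outs T n w \<inter> Z"
    define WO where "WO = {w' \<in> W. T w w'}"
    define WI where "WI = {w' \<in> W. T w' w}"
    have finW: "finite W" using cW k by (intro card_ge_0_finite) simp
    have finZ: "finite Z" using cZ k by (intro card_ge_0_finite) simp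
    have o1: "outs T n w = WO \<union> Ow"
    proof
      show "outs T n w \<subseteq> WO \<union> Ow"
      proof
        fix j assume j: "j \<in> outs T n w"
        hence jj: "j < n" "T w j" by (auto simp: outs_def)
        have "j \<noteq> 0"
        proof
          assume "j = 0" with jj have "T w 0" by simp
          thus False using anti[OF T wn(1) n0] wn(2) by blast
        qed
        thus "j \<in> WO \<union> Ow" using part[OF jj(1)] j jj unfolding WO_def Ow_def by auto
      qed
      show "WO \<union> Ow \<subseteq> outs T n w" unfolding WO_def Ow_def outs_def using Wd by auto
    qed
    have o2: "WO \<inter> Ow = {}" unfolding WO_def Ow_def using WZ by auto
    have k1: "k = card WO + card Ow"
      using reg wn(1) o1 o2 card_Un_disjoint[of WO Ow] finW finZ unfolding WO_def Ow_def
      by (metis (no_types, lifting) finite_Int finite_subset mem_Collect_eq subsetI)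
    have o3: "W - {w} = WI \<union> WO"
    proof
      show "W - {w} \<subseteq> WI \<union> WO"
      proof
        fix j assume j: "j \<in> W - {w}"
        hence "j < n" "j \<noteq> w" "j \<in> W" using Wd by auto
        thus "j \<in> WI \<union> WO" using tot[OF T \<open>j < n\<close> wn(1) \<open>j \<noteq> w\<close>] unfolding WI_def WO_def by blast
      qed
      show "WI \<union> WO \<subseteq> W - {w}" unfolding WI_def WO_def using tour_irr[OF T wn(1)] by auto
    qed
    have o4: "WI \<inter> WO = {}" unfolding WI_def WO_def using anti[OF T] Wd wn by blast
    have "card (W - {w}) = card WI + card WO"
      unfolding o3 by (rule card_Un_disjoint) (use finW o4 in \<open>auto simp: WI_def WO_def\<close>)
    hence k2: "k - 1 = rW w + card WO" using cW w unfolding rW_def rk_def WI_def by simp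
    have cO: "card Ow = 1 + rW w" using k1 k2 k by linarith
    have down: "T w z'" if "z' \<in> Z" "z'' \<in> Z" "T w z''" "T z' z''" for z' z''
    proof (rule ccontr)
      assume nw: "\<not> T w z'"
      have z'n: "z' < n" "T z' 0" using that(1) Zd by auto
      have z''n: "z'' < n" "T z'' 0" using that(2) Zd by auto
      have "z' \<noteq> w" using WZ w that(1) by blast
      hence "T z' w" using tot[OF T wn(1) z'n(1)] nw by blast
      hence "w \<in> outs T n z'" "z'' \<in> outs T n z'" "0 \<in> outs T n z'"
        using wn z'n z''n that n0 by (auto simp: outs_def)
      thus False using nc z'n that(3) z''n(2) wn(2) by blast
    qed
    show ?thesis
    proof
      assume tz: "T w z"
      have "insert z {z' \<in> Z. T z' z} \<subseteq> Ow"
      proof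
        fix y assume "y \<in> insert z {z' \<in> Z. T z' z}"
        hence "y = z \<or> (y \<in> Z \<and> T y z)" by blast
        hence "y \<in> Z" "T w y" using down[OF _ z tz, of y] z tz by auto
        thus "y \<in> Ow" unfolding Ow_def outs_def using Zn by auto
      qed
      moreover have "z \<notin> {z' \<in> Z. T z' z}" using tour_irr[OF T zn(1)] by simp
      ultimately have "card (insert z {z' \<in> Z. T z' z}) \<le> card Ow"
        by (intro card_mono) (auto simp: Ow_def finZ)
      hence "rZ z + 1 \<le> card Ow" using finZ \<open>z \<notin> {z' \<in> Z. T z' z}\<close>
        unfolding rZ_def rk_def by simp
      thus "rZ z \<le> rW w" using cO by simp
    next
      assume le: "rZ z \<le> rW w"
      show "T w z"
      proof (rule ccontr)
        assume ntz: "\<not> T w z"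
        have "Ow \<subseteq> {z' \<in> Z. T z' z}"
        proof
          fix z' assume "z' \<in> Ow"
          hence z': "z' \<in> Z" "T w z'" "z' < n" unfolding Ow_def outs_def by auto
          have "z' \<noteq> z" using z' ntz by auto
          have "T z' z"
          proof (rule ccontr)
            assume "\<not> T z' z"
            hence "T z z'" using tot[OF T z'(3) zn(1) \<open>z' \<noteq> z\<close>] by blast
            hence "T w z" using down[OF z(1) z'(1) z'(2)] by blast
            thus False using ntz by simp
          qed
          thus "z' \<in> {z' \<in> Z. T z' z}" using z' by simp
        qed
        hence "card Ow \<le> rZ z" unfolding rZ_def rk_def by (intro card_mono) (use finZ in auto)
        thus False using cO le by simp
      qed
    qed
  qed
  define f where "f v = (if v = 0 then 0 else if v \<in> W then 1 + rW v else k + 1 + rZ v)" for v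
  have f0: "f 0 = 0" by (simp add: f_def)
  have fW: "f w = 1 + rW w" if "w \<in> W" for w
  proof -
    have "w \<noteq> 0" proof assume "w = 0" with that W0 show False by simp qed
    thus ?thesis using that unfolding f_def by simp
  qed
  have fZ: "f z = k + 1 + rZ z" if "z \<in> Z" for z
  proof -
    have "z \<noteq> 0" proof assume "z = 0" with that Z0 show False by simp qed
    moreover have "z \<notin> W" proof assume "z \<in> W" with that WZ show False by simp qed
    ultimately show ?thesis using that unfolding f_def by simp
  qed
  have fn: "f v < n" if "v < n" for v
    using part[OF that] f0 fW fZ rWk rZk n by fastforce
  have arc: "T x y \<longleftrightarrow> rlt n (f x) (f y)" if x: "x < n" and y: "y < n" for x y
  proof -
    have rc: "rlt n (f x) (f y) \<longleftrightarrow> (f x < f y \<and> f y - f x \<le> k) \<or> (f y < f x \<and> f x - f y \<ge> k + 1)"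
      by (rule rlt_char[OF n fn[OF x] fn[OF y]])
    show ?thesis
    proof -
      consider "x = 0" | "x \<in> W" | "x \<in> Z" using part[OF x] by blast
      then show ?thesis
      proof cases
        case 1
        consider "y = 0" | "y \<in> W" | "y \<in> Z" using part[OF y] by blast
        then show ?thesis
        proof cases
          case 1 thus ?thesis using \<open>x = 0\<close> rc f0 tour_irr[OF T n0] by simp
        next
          case 2
          have "T 0 y" using 2 Wd by blast
          thus ?thesis using \<open>x = 0\<close> rc f0 fW[OF 2] rWk[OF 2] by simp
        next
          case 3
          have "T y 0" using 3 Zd by blast
          hence "\<not> T 0 y" using anti[OF T n0 y] by blast
          thus ?thesis using \<open>x = 0\<close> rc f0 fZ[OF 3] by simp
        qed
      next
        case 2
        note xW = this
        consider "y = 0" | "y \<in> W" | "y \<in> Z" using part[OF y] by blast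
        then show ?thesis
        proof cases
          case 1
          have "T 0 x" using xW Wd by blast
          hence "\<not> T x 0" using anti[OF T n0 x] by blast
          thus ?thesis using 1 rc f0 fW[OF xW] rWk[OF xW] by simp
        next
          case 2 thus ?thesis using rc fW[OF xW] fW[OF 2] rWk[OF xW] rWk[OF 2] rWiff[OF xW 2] by auto
        next
          case 3 thus ?thesis using rc fW[OF xW] fZ[OF 3] rWk[OF xW] rZk[OF 3] cross[OF xW 3] by auto
        qed
      next
        case 3
        note xZ = this
        consider "y = 0" | "y \<in> W" | "y \<in> Z" using part[OF y] by blast
        then show ?thesis
        proof cases
          case 1
          have "T x 0" using xZ Zd by blast
          thus ?thesis using 1 rc f0 fZ[OF xZ] by simp
        next
          case 2
          have ne: "x \<noteq> y" using WZ[OF 2] xZ by blast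
          have "T x y \<longleftrightarrow> \<not> T y x" by (rule tourD[OF T x y ne])
          thus ?thesis using rc fW[OF 2] fZ[OF xZ] rZk[OF xZ] rWk[OF 2] cross[OF 2 xZ] by auto
        next
          case 3 thus ?thesis using rc fZ[OF xZ] fZ[OF 3] rZk[OF xZ] rZk[OF 3] rZiff[OF xZ 3] by auto
        qed
      qed
    qed
  qed
  have injW: "inj_on rW W" and injZ: "inj_on rZ Z" using bW bZ unfolding bij_betw_def by auto
  have inj: "inj_on f {0..<n}"
  proof (rule inj_onI)
    fix x y assume x: "x \<in> {0..<n}" and y: "y \<in> {0..<n}" and e: "f x = f y"
    have xn: "x < n" and yn: "y < n" using x y by auto
    consider "x = 0" | "x \<in> W" | "x \<in> Z" using part[OF xn] by blast
    then show "x = y"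
    proof cases
      case 1
      thus ?thesis using part[OF yn] e f0 fW fZ by force
    next
      case 2
      note xW = this
      consider "y = 0" | "y \<in> W" | "y \<in> Z" using part[OF yn] by blast
      thus ?thesis
      proof cases
        case 1 thus ?thesis using xW e f0 fW by simp
      next
        case 2 thus ?thesis using xW e fW injW unfolding inj_on_def by simp
      next
        case 3 thus ?thesis using xW e fW fZ rWk[OF xW] by simp
      qed
    next
      case 3
      note xZ = this
      consider "y = 0" | "y \<in> W" | "y \<in> Z" using part[OF yn] by blast
      thus ?thesis
      proof cases
        case 1 thus ?thesis using xZ e f0 fZ by simp
      next
        case 2 thus ?thesis using xZ e fW fZ rWk[OF 2] by simp
      next
        case 3 thus ?thesis using xZ e fZ injZ unfolding inj_on_def by simp
      qed
    qed
  qed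
  have "f ` {0..<n} = {0..<n}"
    by (rule endo_inj_surj) (use fn inj in auto)
  hence "bij_betw f {0..<n} {0..<n}" using inj unfolding bij_betw_def by blast
  thus ?thesis unfolding tiso_def iso_on_def using arc by auto
qed



lemma rlt_char2:
  assumes n: "n = 2*k+1" and i: "i < n" and j: "j < n"
  shows "rlt n i j \<longleftrightarrow> (i < j \<and> j \<le> i + k) \<or> (j < i \<and> j + k + 1 \<le> i)"
  unfolding rlt_char[OF n i j] by auto

lemma rlt_tour:
  assumes n: "n = 2*k+1"
  shows "tournament n (rlt n)"
  unfolding tournament_def
proof (intro conjI allI impI)
  fix i assume "i < n" thus "\<not> rlt n i i" using rlt_char[OF n] by simp
next
  fix i j assume ij: "i < n" "j < n" "i \<noteq> j"
  show "rlt n i j \<longleftrightarrow> \<not> rlt n j i" unfolding rlt_char2[OF n ij(1) ij(2)] rlt_char2[OF n ij(2) ij(1)]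
    using ij by auto
qed

lemma rlt_deg:
  assumes n: "n = 2*k+1" and v: "v < n"
  shows "card (outs (rlt n) n v) = k"
proof (cases "v \<le> k")
  case True
  have "outs (rlt n) n v = {v<..v+k}"
  proof (rule set_eqI)
    fix j
    show "j \<in> outs (rlt n) n v \<longleftrightarrow> j \<in> {v<..v+k}"
    proof (cases "j < n")
      case True
      show ?thesis unfolding outs_def using rlt_char2[OF n v True] True \<open>v \<le> k\<close> n by auto
    next
      case False thus ?thesis unfolding outs_def using \<open>v \<le> k\<close> n by auto
    qed
  qed
  thus ?thesis by simp
next
  case False
  have "outs (rlt n) n v = {v<..<n} \<union> {..<v-k}"
  proof (rule set_eqI)
    fix j
    show "j \<in> outs (rlt n) n v \<longleftrightarrow> j \<in> {v<..<n} \<union> {..<v-k}"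
    proof (cases "j < n")
      case True
      show ?thesis unfolding outs_def using rlt_char2[OF n v True] True False n by auto
    next
      case False thus ?thesis unfolding outs_def using \<open>\<not> v \<le> k\<close> n v by auto
    qed
  qed
  moreover have "{v<..<n} \<inter> {..<v-k} = {}" by auto
  ultimately have "card (outs (rlt n) n v) = card {v<..<n} + card {..<v-k}"
    by (simp add: card_Un_disjoint)
  thus ?thesis using False n v by simp
qed

lemma rlt_win:
  assumes n: "n = 2*k+1" and lt: "a < n" "b < n" "w < n"
    and inn: "rlt n a w" "rlt n b w"
  shows "rlt n a b \<longleftrightarrow> (if a < w then int a else int a - int n) < (if b < w then int b else int b - int n)"
proof -
  have A: "(a < w \<and> w \<le> a + k) \<or> (w < a \<and> w + k + 1 \<le> a)" using inn(1) rlt_char2[OF n lt(1) lt(3)] by simp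
  have B: "(b < w \<and> w \<le> b + k) \<or> (w < b \<and> w + k + 1 \<le> b)" using inn(2) rlt_char2[OF n lt(2) lt(3)] by simp
  have C: "rlt n a b \<longleftrightarrow> (a < b \<and> b \<le> a + k) \<or> (b < a \<and> b + k + 1 \<le> a)" by (rule rlt_char2[OF n lt(1) lt(2)])
  show ?thesis
  proof (cases "a < w")
    case True
    show ?thesis
    proof (cases "b < w")
      case True
      thus ?thesis using \<open>a < w\<close> A B C n by auto
    next
      case False
      thus ?thesis using \<open>a < w\<close> A B C n lt by auto
    qed
  next
    case False
    show ?thesis
    proof (cases "b < w")
      case True
      thus ?thesis using \<open>\<not> a < w\<close> A B C n lt by auto
    next
      case False
      thus ?thesis using \<open>\<not> a < w\<close> A B C n lt by auto
    qed
  qed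
qed

lemma rlt_nocyc_in:
  assumes n: "n = 2*k+1" and lt: "x < n" "y < n" "z < n" "w < n"
    and inn: "rlt n x w" "rlt n y w" "rlt n z w"
    and cyc: "rlt n x y" "rlt n y z" "rlt n z x"
  shows False
  using rlt_win[OF n lt(1) lt(2) lt(4) inn(1) inn(2)] rlt_win[OF n lt(2) lt(3) lt(4) inn(2) inn(3)]
    rlt_win[OF n lt(3) lt(1) lt(4) inn(3) inn(1)] cyc by linarith

lemma rlt_snk_src:
  assumes n: "n = 2*k+1"
  shows "SrcS (\<lambda>i j. rlt n j i) n \<subseteq> SrcS (rlt n) n"
proof
  have T: "tournament n (rlt n)" by (rule rlt_tour[OF n])
  fix S assume "S \<in> SrcS (\<lambda>i j. rlt n j i) n"
  then obtain w where S: "S \<subseteq> {0..<n}" "card S = 5" and w: "src_on (\<lambda>i j. rlt n j i) S w"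
    unfolding SrcS_def F5_def by blast
  have wS: "w \<in> S" and wsink: "\<And>x. x \<in> S \<Longrightarrow> x \<noteq> w \<Longrightarrow> rlt n x w" using w by (auto simp: src_on_def)
  have wn: "w < n" using wS S by auto
  define X where "X = S - {w}"
  have Xn: "X \<subseteq> {0..<n}" using S by (auto simp: X_def)
  have cX: "card X = 4" using S wS by (simp add: X_def card_Diff_singleton)
  have nc: "\<forall>a\<in>X. \<forall>b\<in>X. \<forall>c\<in>X. \<not> (rlt n a b \<and> rlt n b c \<and> rlt n c a)"
  proof (intro ballI notI)
    fix a b c assume abc: "a \<in> X" "b \<in> X" "c \<in> X" and cyc: "rlt n a b \<and> rlt n b c \<and> rlt n c a"
    have "a < n" "b < n" "c < n" using abc Xn by auto
    moreover have "rlt n a w" "rlt n b w" "rlt n c w" using abc wsink by (auto simp: X_def)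
    ultimately show False using rlt_nocyc_in[OF n _ _ _ wn] cyc by blast
  qed
  have "bij_betw (rk (rlt n) X) X {0..<4}" using rank_bij[OF T Xn nc] cX by simp
  hence "0 \<in> rk (rlt n) X ` X" unfolding bij_betw_def by auto
  then obtain s where s: "s \<in> X" "rk (rlt n) X s = 0" by (metis imageE)
  have finX: "finite X" using cX by (intro card_ge_0_finite) simp
  have none: "{z \<in> X. rlt n z s} = {}" using s finX unfolding rk_def by simp
  have sn: "s < n" using s Xn by auto
  have "src_on (rlt n) S s" unfolding src_on_def
  proof (intro conjI ballI impI)
    show "s \<in> S" using s by (simp add: X_def)
    fix x assume x: "x \<in> S" "x \<noteq> s"
    show "rlt n s x"
    proof (cases "x = w")
      case True thus ?thesis using wsink s by (simp add: X_def)
    next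
      case False
      hence "x \<in> X" using x by (simp add: X_def)
      hence "\<not> rlt n x s" using none by blast
      moreover have "x < n" using x S by auto
      ultimately show ?thesis using tot[OF T \<open>x < n\<close> sn x(2)] by blast
    qed
  qed
  thus "S \<in> SrcS (rlt n) n" using S unfolding SrcS_def F5_def by blast
qed

lemma rlt_s5:
  assumes n: "n = 2*k+1"
  shows "s5 n (rlt n) + n * (k choose 4) = n choose 5"
proof -
  have T: "tournament n (rlt n)" by (rule rlt_tour[OF n])
  have "NS (rlt n) n = SrcS (rlt n) n" using NS_eq[OF T] rlt_snk_src[OF n] by blast
  hence "card (NS (rlt n) n) = (\<Sum>v<n. card (outs (rlt n) n v) choose 4)" using card_SrcS[OF T] by simp
  also have "\<dots> = (\<Sum>v<n. k choose 4)" by (rule sum.cong) (simp_all add: rlt_deg[OF n])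
  finally show ?thesis using s5_NS[of n "rlt n"] by simp
qed

lemma s5_le: "s5 n T \<le> n choose 5"
  using s5_NS[of n T] by simp

lemma reg_small:
  assumes T: "tournament n T" and n: "n = 2*k+1" and k: "k < 4"
    and reg: "\<forall>v<n. card (outs T n v) = k"
  shows "s5 n T = n choose 5"
proof -
  have d: "card (outs (\<lambda>i j. T j i) n v) = k" if "v < n" for v
    using deg_sum[OF T that] reg that n by simp
  have "card (SrcS T n) = 0" using card_SrcS[OF T] reg k by simp
  moreover have "card (SrcS (\<lambda>i j. T j i) n) = 0" using card_SrcS[OF tour_conv[OF T]] d k by simp
  ultimately have "SrcS T n = {}" "SrcS (\<lambda>i j. T j i) n = {}" using finite_NS(2) by auto
  hence "NS T n = {}" using NS_eq[OF T] by simp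
  thus ?thesis using s5_NS[of n T] by simp
qed



lemma L7: "{..<(7::nat)} = {0,1,2,3,4,5,6}"
  by (auto simp: lessThan_nat_numeral lessThan_Suc)

lemma all7: "(\<forall>i<(7::nat). P i) \<longleftrightarrow> P 0 \<and> P 1 \<and> P 2 \<and> P 3 \<and> P 4 \<and> P 5 \<and> P 6"
proof -
  have "(\<forall>i<(7::nat). P i) \<longleftrightarrow> (\<forall>i\<in>{..<7}. P i)" by auto
  also have "\<dots> \<longleftrightarrow> P 0 \<and> P 1 \<and> P 2 \<and> P 3 \<and> P 4 \<and> P 5 \<and> P 6" unfolding L7 by simp
  finally show ?thesis .
qed

lemma coll7: "{j. j < (7::nat) \<and> P j} = {j \<in> {0,1,2,3,4,5,6}. P j}"
  unfolding L7[symmetric] by auto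


definition qr7 :: "nat \<Rightarrow> nat \<Rightarrow> bool" where
  "qr7 i j \<longleftrightarrow> (j + 7 - i) mod 7 \<in> {1,2,4}"

lemma qr7_tour: "tournament 7 qr7"
  unfolding tournament_def all7 qr7_def by simp


lemma cardc7: "card {j. j < (7::nat) \<and> P j} = length (filter P [0,1,2,3,4,5,6])"
proof -
  have "[0,1,2,3,4,5,6] = [0..<(7::nat)]" by (simp add: upt_rec)
  hence "length (filter P [0,1,2,3,4,5,6]) = card {i. i < 7 \<and> P ([0..<(7::nat)] ! i)}"
    by (simp only: length_filter_conv_card) simp
  also have "\<dots> = card {j. j < (7::nat) \<and> P j}" by (rule arg_cong[where f=card]) auto
  finally show ?thesis by simp
qed

lemma qr7_deg: "\<forall>v<7. card {j. j < 7 \<and> qr7 v j} = 3"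
  by (simp add: all7 cardc7 qr7_def)

lemma qr7_in: "\<forall>v<7. \<forall>u<7. qr7 v u \<longrightarrow> card {w. w < 7 \<and> qr7 v w \<and> qr7 u w} = 1"
  unfolding all7 cardc7 by (simp add: qr7_def)

lemma qr7_dr: "doubly_regular 7 qr7"
  unfolding doubly_regular_def regular_def Let_def
proof (intro conjI qr7_tour allI impI ballI)
  show "\<And>i. i < 7 \<Longrightarrow> card {j. j < 7 \<and> qr7 i j} = (7 - 1) div 2" using qr7_deg by simp
  fix v u assume v: "v < 7" and u: "u \<in> {j. j < 7 \<and> qr7 v j}"
  have "{w \<in> {j. j < 7 \<and> qr7 v j}. qr7 u w} = {w. w < 7 \<and> qr7 v w \<and> qr7 u w}" by auto
  thus "card {w \<in> {j. j < 7 \<and> qr7 v j}. qr7 u w} = (card {j. j < 7 \<and> qr7 v j} - 1) div 2"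
    using qr7_in qr7_deg v u by simp
qed

definition kz7 :: "nat \<Rightarrow> nat \<Rightarrow> bool" where
  "kz7 x y \<longleftrightarrow> (if x < 6 \<and> y < 6 then delta_tt2 x y
     else if x = 6 then y \<in> {0,2,4} else y = 6 \<and> x \<in> {1,3,5})"

lemma kz7_tour: "tournament 7 kz7"
  unfolding tournament_def all7 by (simp add: kz7_def delta_tt2_def)

lemma kz7_deg: "\<forall>i<7. card {j. j < 7 \<and> kz7 i j} = 3"
  unfolding all7 cardc7 by (simp add: kz7_def delta_tt2_def)

lemma kz7_kotzig: "kotzig 7 kz7"
  unfolding kotzig_def regular_def
proof (intro conjI)
  show "tournament 7 kz7" by (rule kz7_tour)
  show "\<forall>i<7. card {j. j < 7 \<and> kz7 i j} = (7 - 1) div 2"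
    using kz7_deg by simp
  have e: "{0..<7} - {6} = {0..<(6::nat)}" by auto
  have "iso_on ({0..<7} - {6}) kz7 {0..<6::nat} delta_tt2"
    unfolding iso_on_def e by (rule exI[of _ id]) (auto simp: kz7_def)
  moreover have "(6::nat) < 7" by simp
  ultimately show "\<exists>v<7. iso_on ({0..<7} - {v}) kz7 {0..<6::nat} delta_tt2" by (intro exI[of _ 6]) simp
qed



lemma reg7: assumes "regular 7 T" shows "s5_max 7 T"
proof -
  have T: "tournament 7 T" and d: "\<forall>i<7. card (outs T 7 i) = 3"
    using assms unfolding regular_def outs_def by auto
  have "s5 7 T = 7 choose 5" by (rule reg_small[OF T _ _ d, of ]) simp_all
  thus ?thesis unfolding s5_max_def using T s5_le by metis
qed

lemma rlt7_reg: "regular 7 (rlt 7)"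
  unfolding regular_def using rlt_tour[of 7 3] rlt_deg[of 7 3] by (simp add: outs_def)

lemma big:
  fixes n :: nat
  assumes "odd n" "n \<ge> 9"
  shows "(\<forall>T. tournament n T \<longrightarrow>
               real (s5 n T) \<le> (real n + 1) * real n * (real n - 1) * (real n - 3) * (11 * real n - 47) / 1920)
          \<and> real (s5 n (rlt n)) = (real n + 1) * real n * (real n - 1) * (real n - 3) * (11 * real n - 47) / 1920
          \<and> (\<forall>T. tournament n T \<and>
               real (s5 n T) = (real n + 1) * real n * (real n - 1) * (real n - 3) * (11 * real n - 47) / 1920
               \<longrightarrow> tiso n T (rlt n))"
proof -
  obtain k where n: "n = 2*k+1" using assms(1) oddE by blast
  have k: "k \<ge> 4" using assms(2) n by simp
  define F where "F = (real n + 1) * real n * (real n - 1) * (real n - 3) * (11 * real n - 47) / 1920"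
  have fid: "real (n choose 5) - real n * real (k choose 4) = F" unfolding F_def by (rule formula_id[OF n])
  have sr: "real (s5 n T) + real (card (NS T n)) = real (n choose 5)" for T
    using s5_NS[of n T] by (metis of_nat_add)
  have A: "real (s5 n T) \<le> F" if T: "tournament n T" for T
  proof -
    have "n * (k choose 4) \<le> card (NS T n)" using bound_main(1)[OF T n] k by simp
    hence "real n * real (k choose 4) \<le> real (card (NS T n))" by (metis of_nat_le_iff of_nat_mult)
    thus ?thesis using sr[of T] fid by linarith
  qed
  have B: "real (s5 n (rlt n)) = F"
  proof -
    have "real (s5 n (rlt n)) + real n * real (k choose 4) = real (n choose 5)"
      using rlt_s5[OF n] by (metis of_nat_add of_nat_mult)
    thus ?thesis using fid by linarith
  qed
  have C: "tiso n T (rlt n)" if T: "tournament n T" and eq: "real (s5 n T) = F" for T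
  proof -
    have "real (card (NS T n)) = real n * real (k choose 4)" using sr[of T] eq fid by linarith
    hence cN: "card (NS T n) = n * (k choose 4)" by (metis of_nat_eq_iff of_nat_mult)
    have bm: "(\<forall>v<n. card (outs T n v) = k) \<and> SrcS T n = NS T n \<and> SrcS (\<lambda>i j. T j i) n = NS T n"
      using bound_main(2)[OF T n _ cN] k by simp
    have P1: "PA T n" unfolding PA_def
    proof (intro allI impI)
      fix u X assume "u < n" "X \<subseteq> outs T n u \<and> card X = 4"
      thus "\<exists>t. src_on (\<lambda>i j. T j i) X t" using propA[OF T _ \<open>u < n\<close>] bm by auto
    qed
    have P2: "PA (\<lambda>i j. T j i) n" unfolding PA_def
    proof (intro allI impI)
      fix u X assume "u < n" "X \<subseteq> outs (\<lambda>i j. T j i) n u \<and> card X = 4"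
      thus "\<exists>t. src_on (\<lambda>i j. (\<lambda>i j. T j i) j i) X t"
        using propA[OF tour_conv[OF T] _ \<open>u < n\<close>, of X] bm by auto
    qed
    have nc: "\<forall>u<n. \<forall>a\<in>outs T n u. \<forall>b\<in>outs T n u. \<forall>c\<in>outs T n u. \<not> (T a b \<and> T b c \<and> T c a)"
      using key_nocycle[OF T P1 P2 _ k] bm by blast
    show ?thesis by (rule iso_rlt[OF T n _ _ nc]) (use k bm in auto)
  qed
  show ?thesis using A B C unfolding F_def by blast
qed

theorem proposition1:
  shows "(\<forall>n::nat. odd n \<and> n \<ge> 9 \<longrightarrow>
            (\<forall>T. tournament n T \<longrightarrow>
               real (s5 n T) \<le> (real n + 1) * real n * (real n - 1) * (real n - 3) * (11 * real n - 47) / 1920)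
          \<and> real (s5 n (rlt n)) = (real n + 1) * real n * (real n - 1) * (real n - 3) * (11 * real n - 47) / 1920
          \<and> (\<forall>T. tournament n T \<and>
               real (s5 n T) = (real n + 1) * real n * (real n - 1) * (real n - 3) * (11 * real n - 47) / 1920
               \<longrightarrow> tiso n T (rlt n)))
       \<and> s5_max 7 (rlt 7)
       \<and> (\<exists>T. doubly_regular 7 T) \<and> (\<forall>T. doubly_regular 7 T \<longrightarrow> s5_max 7 T)
       \<and> (\<exists>T. kotzig 7 T) \<and> (\<forall>T. kotzig 7 T \<longrightarrow> s5_max 7 T)"
proof -
  have a: "s5_max 7 (rlt 7)" by (rule reg7[OF rlt7_reg])
  have b: "\<exists>T. doubly_regular 7 T" using qr7_dr by blast
  have c: "\<forall>T. doubly_regular 7 T \<longrightarrow> s5_max 7 T" using reg7 unfolding doubly_regular_def by blast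
  have d: "\<exists>T. kotzig 7 T" using kz7_kotzig by blast
  have e: "\<forall>T. kotzig 7 T \<longrightarrow> s5_max 7 T" using reg7 unfolding kotzig_def by blast
  show ?thesis
    apply (intro conjI)
    subgoal by (intro allI impI) (rule big; simp)
    using a b c d e by blast+
qed

end
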